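(* Let $n,k,r$ be integers with $k,r\geq 2$ and $n\geq k+1$. If $H$ is a vertex-$k$-maximal $r$-uniform hypergraph on $n$ vertices, then $|E(H)|\geq \binom{n}{r}-\binom{n-k}{r}$.
   Context: Binomial coefficients satisfy $\binom{a}{b}=0$ when $b>a$. A hypergraph $H=(V,E)$ consists of a finite vertex set $V$ and a set $E$ of non-empty subsets of $V$ (edges); it is $r$-uniform if all edges have exactly $r$ elements. The complement $H^c$ has as edges the $r$-subsets of $V$ not in $E$. A subhypergraph is $H'=(V',E')$ with $V'\subseteq V$, $E'\subseteq E$. $H+e=(V,E\cup\{e\})$ for $e\in E(H^c)$. $H-Y$ is the hypergraph induced on $V\setminus Y$ (keeping edges contained in $V\setminus Y$). Connectedness is defined via paths (alternating sequences of distinct vertices and distinct edges with consecutive vertices in the intermediate edge). A vertex-cut is a set $X$ with $H-X$ disconnected. $\kappa(H)$ is the minimum size of a vertex-cut if one exists, and $|V(H)|-1$ otherwise. $\overline{\kappa}(H)=\max\{\kappa(H'): H'\subseteq H\}$. An $r$-uniform hypergraph $H$ is vertex-$k$-maximal if $\overline{\kappa}(H)\leq k$ but $\overline{\kappa}(H+e)\geq k+1$ for every $e\in E(H^c)$. *)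

theory Defs
  imports Main
begin

definition hypergraph :: "'a set \<Rightarrow> 'a set set \<Rightarrow> bool" where
  "hypergraph V E \<longleftrightarrow> finite V \<and> (\<forall>e\<in>E. e \<noteq> {} \<and> e \<subseteq> V)"

definition uniform :: "nat \<Rightarrow> 'a set \<Rightarrow> 'a set set \<Rightarrow> bool" where
  "uniform r V E \<longleftrightarrow> hypergraph V E \<and> (\<forall>e\<in>E. card e = r)"

definition compl_edges :: "nat \<Rightarrow> 'a set \<Rightarrow> 'a set set \<Rightarrow> 'a set set" where
  "compl_edges r V E = {e. e \<subseteq> V \<and> card e = r \<and> e \<notin> E}"

definition is_path :: "'a set \<Rightarrow> 'a set set \<Rightarrow> 'a list \<Rightarrow> 'a set list \<Rightarrow> bool" where
  "is_path V E vs es \<longleftrightarrow> vs \<noteq> [] \<and> length es + 1 = length vs \<and>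
     distinct vs \<and> distinct es \<and> set vs \<subseteq> V \<and> set es \<subseteq> E \<and>
     (\<forall>i < length es. vs ! i \<in> es ! i \<and> vs ! (Suc i) \<in> es ! i)"

definition connected_hg :: "'a set \<Rightarrow> 'a set set \<Rightarrow> bool" where
  "connected_hg V E \<longleftrightarrow> (\<forall>u\<in>V. \<forall>v\<in>V. \<exists>vs es. is_path V E vs es \<and> hd vs = u \<and> last vs = v)"

definition vertex_cut :: "'a set \<Rightarrow> 'a set set \<Rightarrow> 'a set \<Rightarrow> bool" where
  "vertex_cut V E X \<longleftrightarrow> X \<subseteq> V \<and> \<not> connected_hg (V - X) {e\<in>E. e \<subseteq> V - X}"

definition kappa :: "'a set \<Rightarrow> 'a set set \<Rightarrow> int" where
  "kappa V E = (if \<exists>X. vertex_cut V E X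
                then int (Min {card X | X. vertex_cut V E X})
                else int (card V) - 1)"

definition kappa_bar :: "'a set \<Rightarrow> 'a set set \<Rightarrow> int" where
  "kappa_bar V E = Max {kappa V' E' | V' E'. V' \<subseteq> V \<and> E' \<subseteq> E \<and> hypergraph V' E'}"

definition vertex_k_maximal :: "nat \<Rightarrow> nat \<Rightarrow> 'a set \<Rightarrow> 'a set set \<Rightarrow> bool" where
  "vertex_k_maximal r k V E \<longleftrightarrow> uniform r V E \<and> kappa_bar V E \<le> int k \<and>
     (\<forall>e\<in>compl_edges r V E. kappa_bar V (insert e E) \<ge> int k + 1)"

end

theory Submission
  imports Defs
begin


lemma list_cross:
  "xs \<noteq> [] \<Longrightarrow> hd xs \<in> S \<Longrightarrow> last xs \<notin> S \<Longrightarrow>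
   \<exists>i. Suc i < length xs \<and> xs!i \<in> S \<and> xs!(Suc i) \<notin> S"
proof (induction xs)
  case Nil then show ?case by simp
next
  case (Cons a xs)
  show ?case
  proof (cases xs)
    case Nil then show ?thesis using Cons.prems by simp
  next
    case (Cons b ys)
    show ?thesis
    proof (cases "b \<in> S")
      case True
      then have "hd xs \<in> S" using Cons by simp
      moreover have "last xs \<notin> S" using Cons.prems Cons by simp
      ultimately obtain i where "Suc i < length xs \<and> xs!i \<in> S \<and> xs!(Suc i) \<notin> S"
        using Cons.IH Cons by auto
      then show ?thesis by (intro exI[of _ "Suc i"]) auto
    next
      case False
      then show ?thesis using Cons.prems Cons by (intro exI[of _ 0]) auto
    qed
  qed
qed

lemma path_prefix:
  assumes "is_path U E vs es" "j < length vs"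
  shows "is_path U E (take (Suc j) vs) (take j es) \<and> hd (take (Suc j) vs) = hd vs
         \<and> last (take (Suc j) vs) = vs!j"
proof -
  have len: "length es + 1 = length vs" "vs \<noteq> []" using assms(1) unfolding is_path_def by auto
  have "is_path U E (take (Suc j) vs) (take j es)"
    using assms len unfolding is_path_def
    by (auto dest: in_set_takeD simp: min_def)
  moreover have "hd (take (Suc j) vs) = hd vs" using len by (cases vs) auto
  moreover have "last (take (Suc j) vs) = vs!j" using assms(2)
    by (simp only: take_Suc_conv_app_nth[OF assms(2)] last_snoc)
  ultimately show ?thesis by blast
qed

lemma path_snoc:
  assumes "is_path U E vs es" "z \<notin> set vs" "g \<notin> set es" "z \<in> U" "g \<in> E"
    "last vs \<in> g" "z \<in> g"
  shows "is_path U E (vs @ [z]) (es @ [g])"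
proof -
  have len: "length es + 1 = length vs" "vs \<noteq> []" using assms(1) unfolding is_path_def by auto
  have l1: "length vs - 1 = length es" using len by simp
  have lv: "last vs = vs ! length es" using len l1 by (simp add: last_conv_nth)
  have "\<forall>i < length (es @ [g]). (vs@[z]) ! i \<in> (es@[g]) ! i \<and> (vs@[z]) ! (Suc i) \<in> (es@[g]) ! i"
  proof (intro allI impI)
    fix i assume "i < length (es @ [g])"
    then have "i < length es \<or> i = length es" by auto
    then show "(vs@[z]) ! i \<in> (es@[g]) ! i \<and> (vs@[z]) ! (Suc i) \<in> (es@[g]) ! i"
    proof
      assume i: "i < length es"
      then show ?thesis using assms(1) len unfolding is_path_def
        by (auto simp: nth_append)
    next
      assume i: "i = length es"
      then show ?thesis using assms(6,7) lv len by (auto simp: nth_append)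
    qed
  qed
  then show ?thesis using assms len unfolding is_path_def by auto
qed

lemma path_extend:
  assumes "is_path U E vs es" "hd vs = u" "last vs = w" "g \<in> E" "w \<in> g" "z \<in> g" "z \<in> U"
  shows "\<exists>vs' es'. is_path U E vs' es' \<and> hd vs' = u \<and> last vs' = z"
proof (cases "z \<in> set vs")
  case True
  then obtain j where "j < length vs" "vs!j = z" by (auto simp: in_set_conv_nth)
  then show ?thesis using path_prefix[OF assms(1)] assms(2) by metis
next
  case zn: False
  show ?thesis
  proof (cases "g \<in> set es")
    case False
    then show ?thesis using path_snoc[OF assms(1) zn False assms(7,4)] assms
      by (intro exI[of _ "vs@[z]"] exI[of _ "es@[g]"]) (auto simp: is_path_def)
  next
    case True
    then obtain i where i: "i < length es" "es!i = g" by (auto simp: in_set_conv_nth)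
    have len: "length es + 1 = length vs" "distinct es" using assms(1) unfolding is_path_def by auto
    have vi: "vs!i \<in> g" using assms(1) i unfolding is_path_def by auto
    from path_prefix[OF assms(1), of i] i len
    have P: "is_path U E (take (Suc i) vs) (take i es)" "hd (take (Suc i) vs) = u"
      "last (take (Suc i) vs) = vs!i" using assms(2) by auto
    have "g \<notin> set (take i es)"
    proof
      assume "g \<in> set (take i es)"
      then obtain j where j: "j < length (take i es)" "take i es ! j = g" by (auto simp: in_set_conv_nth)
      then have "j < i" "es ! j = es ! i" using i by auto
      then show False using len(2) i j nth_eq_iff_index_eq[OF len(2), of j i] by simp
    qed
    moreover have "z \<notin> set (take (Suc i) vs)" using zn by (meson in_set_takeD)
    ultimately have "is_path U E (take (Suc i) vs @ [z]) (take i es @ [g])"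
      using path_snoc[OF P(1)] P(3) vi assms by auto
    then show ?thesis using P(2) assms
      by (intro exI[of _ "take (Suc i) vs @ [z]"] exI[of _ "take i es @ [g]"]) (auto simp: is_path_def)
  qed
qed



definition sep :: "'a set \<Rightarrow> 'a set set \<Rightarrow> 'a set \<Rightarrow> 'a set \<Rightarrow> 'a set \<Rightarrow> bool" where
 "sep V E X A B \<longleftrightarrow> X \<subseteq> V \<and> A \<inter> B = {} \<and> A \<union> B = V - X \<and> A \<noteq> {} \<and> B \<noteq> {} \<and>
    (\<forall>e\<in>E. e \<subseteq> V - X \<longrightarrow> e \<inter> A = {} \<or> e \<inter> B = {})"

lemma sep_sym: "sep V E X A B \<Longrightarrow> sep V E X B A"
  unfolding sep_def by blast

lemma path_single: "u \<in> U \<Longrightarrow> is_path U E [u] []"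
  unfolding is_path_def by auto

lemma connected_small:
  assumes "finite U" "card U \<le> 1" shows "connected_hg U E"
  unfolding connected_hg_def
proof (intro ballI)
  fix u v assume uv: "u \<in> U" "v \<in> U"
  then have "u = v" using assms card_le_Suc0_iff_eq[OF assms(1)] by auto
  then show "\<exists>vs es. is_path U E vs es \<and> hd vs = u \<and> last vs = v"
    using path_single[OF uv(1)] by force
qed

lemma path_cross:
  assumes "connected_hg U E'" "u \<in> U" "u \<in> S" "v \<in> U" "v \<notin> S"
  shows "\<exists>g\<in>E'. \<exists>x\<in>g. \<exists>y\<in>g. x \<in> S \<and> y \<notin> S \<and> y \<in> U"
proof -
  obtain vs es where p: "is_path U E' vs es" "hd vs = u" "last vs = v"
    using assms(1,2,4) unfolding connected_hg_def by blast
  have ne: "vs \<noteq> []" and len: "length es + 1 = length vs" using p unfolding is_path_def by auto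
  obtain i where i: "Suc i < length vs" "vs!i \<in> S" "vs!(Suc i) \<notin> S"
    using list_cross[OF ne] p assms by auto
  have "i < length es" using i len by simp
  then have "es!i \<in> E'" "vs!i \<in> es!i" "vs!(Suc i) \<in> es!i" "vs!(Suc i) \<in> U"
    using p(1) i unfolding is_path_def by (auto dest: nth_mem)
  then show ?thesis using i by blast
qed

lemma cut_sep:
  assumes "vertex_cut V E X"
  shows "\<exists>A B. sep V E X A B"
proof -
  let ?U = "V - X" let ?E = "{e\<in>E. e \<subseteq> V - X}"
  have X: "X \<subseteq> V" and nc: "\<not> connected_hg ?U ?E" using assms unfolding vertex_cut_def by auto
  then obtain u v where uv: "u \<in> ?U" "v \<in> ?U"
    "\<not> (\<exists>vs es. is_path ?U ?E vs es \<and> hd vs = u \<and> last vs = v)"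
    unfolding connected_hg_def by blast
  define A where "A = {w\<in>?U. \<exists>vs es. is_path ?U ?E vs es \<and> hd vs = u \<and> last vs = w}"
  define B where "B = ?U - A"
  have uA: "u \<in> A" unfolding A_def using uv(1) path_single[OF uv(1)] by force
  have vB: "v \<in> B" unfolding B_def A_def using uv by blast
  have "\<forall>e\<in>E. e \<subseteq> V - X \<longrightarrow> e \<inter> A = {} \<or> e \<inter> B = {}"
  proof (intro ballI impI)
    fix e assume e: "e \<in> E" "e \<subseteq> V - X"
    show "e \<inter> A = {} \<or> e \<inter> B = {}"
    proof (rule ccontr)
      assume "\<not> (e \<inter> A = {} \<or> e \<inter> B = {})"
      then obtain w z where wz: "w \<in> e" "w \<in> A" "z \<in> e" "z \<in> B" by blast
      then obtain vs es where "is_path ?U ?E vs es" "hd vs = u" "last vs = w" unfolding A_def by blast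
      from path_extend[OF this, of e z] e wz
      have "\<exists>vs' es'. is_path ?U ?E vs' es' \<and> hd vs' = u \<and> last vs' = z" unfolding B_def by blast
      then have "z \<in> A" using wz e unfolding A_def B_def by blast
      then show False using wz unfolding B_def by blast
    qed
  qed
  moreover have "A \<subseteq> ?U" unfolding A_def by blast
  ultimately have "sep V E X A B" unfolding sep_def using X uA vB unfolding B_def by blast
  then show ?thesis by blast
qed

lemma finite_kset:
  assumes "finite V"
  shows "finite {kappa V' E' | V' E'. V' \<subseteq> V \<and> E' \<subseteq> E \<and> hypergraph V' E'}"
proof -
  have "{kappa V' E' | V' E'. V' \<subseteq> V \<and> E' \<subseteq> E \<and> hypergraph V' E'}
     \<subseteq> (\<lambda>p. kappa (fst p) (snd p)) ` (Pow V \<times> Pow (Pow V))"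
  proof
    fix z assume "z \<in> {kappa V' E' | V' E'. V' \<subseteq> V \<and> E' \<subseteq> E \<and> hypergraph V' E'}"
    then obtain V' E' where z: "z = kappa V' E'" "V' \<subseteq> V" "hypergraph V' E'" by blast
    then have "E' \<subseteq> Pow V" unfolding hypergraph_def by blast
    then have "(V', E') \<in> Pow V \<times> Pow (Pow V)" using z by blast
    then show "z \<in> (\<lambda>p. kappa (fst p) (snd p)) ` (Pow V \<times> Pow (Pow V))"
      using z by (intro image_eqI[where x="(V',E')"]) auto
  qed
  then show ?thesis using assms by (meson finite_Pow_iff finite_SigmaI finite_imageI finite_subset)
qed

lemma kb_ge:
  assumes "finite V" "V' \<subseteq> V" "E' \<subseteq> E" "hypergraph V' E'"
  shows "kappa V' E' \<le> kappa_bar V E"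
  unfolding kappa_bar_def
proof (rule Max_ge[OF finite_kset[OF assms(1)]])
  show "kappa V' E' \<in> {kappa V' E' | V' E'. V' \<subseteq> V \<and> E' \<subseteq> E \<and> hypergraph V' E'}"
    using assms(2-4) by (intro CollectI exI[of _ V'] exI[of _ E']) simp
qed

lemma kb_obtain:
  assumes "finite V" "kappa_bar V E \<ge> c"
  shows "\<exists>V' E'. V' \<subseteq> V \<and> E' \<subseteq> E \<and> hypergraph V' E' \<and> kappa V' E' \<ge> c"
proof -
  let ?S = "{kappa V' E' | V' E'. V' \<subseteq> V \<and> E' \<subseteq> E \<and> hypergraph V' E'}"
  have h: "hypergraph ({}::'a set) {}" unfolding hypergraph_def by simp
  have "\<exists>V' E'. kappa ({}::'a set) {} = kappa V' E' \<and> V' \<subseteq> V \<and> E' \<subseteq> E \<and> hypergraph V' E'"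
    using h by blast
  then have "kappa ({}::'a set) {} \<in> ?S" by simp
  then have "?S \<noteq> {}" by blast
  then have "Max ?S \<in> ?S" by (rule Max_in[OF finite_kset[OF assms(1)]])
  then have "\<exists>V' E'. Max ?S = kappa V' E' \<and> V' \<subseteq> V \<and> E' \<subseteq> E \<and> hypergraph V' E'"
    by (simp only: mem_Collect_eq)
  then obtain V' E' where w: "Max ?S = kappa V' E'" "V' \<subseteq> V" "E' \<subseteq> E" "hypergraph V' E'" by blast
  have "kappa_bar V E = Max ?S" unfolding kappa_bar_def ..
  then have "c \<le> kappa V' E'" using assms(2) w(1) by simp
  then show ?thesis using w(2-4) by blast
qed

lemma kb_mono:
  assumes "finite V" "V' \<subseteq> V" "E' \<subseteq> E"
  shows "kappa_bar V' E' \<le> kappa_bar V E"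
proof -
  have fV': "finite V'" using finite_subset[OF assms(2,1)] .
  have "\<exists>V'' E''. V'' \<subseteq> V' \<and> E'' \<subseteq> E' \<and> hypergraph V'' E'' \<and> kappa V'' E'' \<ge> kappa_bar V' E'"
    by (rule kb_obtain[where V=V' and E=E' and c="kappa_bar V' E'", OF fV' order_refl])
  then obtain V'' E'' where w: "V'' \<subseteq> V'" "E'' \<subseteq> E'" "hypergraph V'' E''" "kappa V'' E'' \<ge> kappa_bar V' E'"
    by blast
  have "kappa V'' E'' \<le> kappa_bar V E"
    using kb_ge[OF assms(1) order_trans[OF w(1) assms(2)] order_trans[OF w(2) assms(3)] w(3)] .
  then show ?thesis using w by linarith
qed

lemma kappa_le_cut:
  assumes "finite W" "vertex_cut W E Y" shows "kappa W E \<le> int (card Y)"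
proof -
  let ?S = "{card X | X. vertex_cut W E X}"
  have "?S \<subseteq> {..card W}"
  proof
    fix z assume "z \<in> ?S"
    then obtain X where "z = card X" "vertex_cut W E X" by blast
    then show "z \<in> {..card W}" unfolding vertex_cut_def using assms(1) card_mono by auto
  qed
  then have "finite ?S" using finite_subset by blast
  moreover have "card Y \<in> ?S" using assms(2) by blast
  ultimately have "Min ?S \<le> card Y" by (rule Min_le)
  moreover have "\<exists>X. vertex_cut W E X" using assms(2) by blast
  ultimately show ?thesis unfolding kappa_def by simp
qed

lemma kappa_ge:
  assumes "hypergraph W E'" "kappa W E' \<ge> int k + 1"
  shows "card W \<ge> k + 2 \<and> (\<forall>Y \<subseteq> W. card Y \<le> k \<longrightarrow> connected_hg (W - Y) {e\<in>E'. e \<subseteq> W - Y})"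
proof -
  have fW: "finite W" using assms(1) unfolding hypergraph_def by auto
  have conn: "\<forall>Y \<subseteq> W. card Y \<le> k \<longrightarrow> connected_hg (W - Y) {e\<in>E'. e \<subseteq> W - Y}"
  proof (intro allI impI)
    fix Y assume Y: "Y \<subseteq> W" "card Y \<le> k"
    show "connected_hg (W - Y) {e\<in>E'. e \<subseteq> W - Y}"
    proof (rule ccontr)
      assume "\<not> ?thesis"
      then have "vertex_cut W E' Y" using Y unfolding vertex_cut_def by auto
      then have "kappa W E' \<le> int (card Y)" using kappa_le_cut fW by blast
      then show False using Y assms(2) by linarith
    qed
  qed
  have "card W \<ge> k + 2"
  proof (cases "\<exists>X. vertex_cut W E' X")
    case False
    then have "kappa W E' = int (card W) - 1" unfolding kappa_def by auto
    then show ?thesis using assms(2) by linarith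
  next
    case True
    then obtain X where X: "vertex_cut W E' X" by blast
    then have "kappa W E' \<le> int (card X)" using kappa_le_cut fW by blast
    then have ck: "card X \<ge> k + 1" using assms(2) by linarith
    have "\<not> connected_hg (W - X) {e\<in>E'. e \<subseteq> W - X}" "X \<subseteq> W" using X unfolding vertex_cut_def by auto
    then have "card (W - X) \<ge> 2" using connected_small[of "W - X"] fW by fastforce
    moreover have "card W = card X + card (W - X)"
    proof -
      have fX: "finite X" using \<open>X \<subseteq> W\<close> fW finite_subset by blast
      have "card (W - X) = card W - card X" using card_Diff_subset[OF fX \<open>X \<subseteq> W\<close>] .
      moreover have "card X \<le> card W" using card_mono[OF fW \<open>X \<subseteq> W\<close>] .
      ultimately show ?thesis by linarith
    qed
    ultimately show ?thesis using ck by linarith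
  qed
  then show ?thesis using conn by blast
qed

lemma exists_sep:
  assumes "hypergraph V E" "kappa_bar V E \<le> int k" "card V \<ge> k + 2"
  shows "\<exists>X A B. sep V E X A B \<and> card X \<le> k"
proof -
  have fV: "finite V" using assms(1) unfolding hypergraph_def by auto
  have "kappa V E \<le> kappa_bar V E" using kb_ge[OF fV order_refl order_refl assms(1)] .
  then have kk: "kappa V E \<le> int k" using assms(2) by linarith
  have ex: "\<exists>X. vertex_cut V E X"
  proof (rule ccontr)
    assume "\<not> ?thesis"
    then have "kappa V E = int (card V) - 1" unfolding kappa_def by auto
    then show False using kk assms(3) by linarith
  qed
  let ?S = "{card X | X. vertex_cut V E X}"
  have "?S \<subseteq> {..card V}"
  proof
    fix z assume "z \<in> ?S"
    then obtain X where "z = card X" "vertex_cut V E X" by blast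
    then show "z \<in> {..card V}" unfolding vertex_cut_def using fV card_mono by auto
  qed
  then have "finite ?S" using finite_subset by blast
  moreover have "?S \<noteq> {}" using ex by blast
  ultimately have "Min ?S \<in> ?S" by (rule Min_in)
  then have "\<exists>X. Min ?S = card X \<and> vertex_cut V E X" by (simp only: mem_Collect_eq)
  then obtain X where X: "vertex_cut V E X" "card X = Min ?S" by metis
  have "kappa V E = int (Min ?S)" using ex unfolding kappa_def by simp
  then have "card X \<le> k" using X kk by linarith
  then show ?thesis using cut_sep[OF X(1)] by blast
qed

lemma sep_enlarge:
  assumes "finite V" "card V \<ge> k + 2"
  shows "sep V E X A B \<Longrightarrow> card X \<le> k \<Longrightarrow> \<exists>X' A' B'. sep V E X' A' B' \<and> card X' = k"
proof (induction "k - card X" arbitrary: X A B)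
  case 0
  then show ?case by (intro exI[of _ X] exI[of _ A] exI[of _ B]) auto
next
  case (Suc d)
  have X: "X \<subseteq> V" "A \<inter> B = {}" "A \<union> B = V - X" "A \<noteq> {}" "B \<noteq> {}"
    using Suc.prems unfolding sep_def by auto
  have fX: "finite X" using X assms finite_subset by blast
  have fA: "finite A" "finite B" using X assms by (metis Diff_subset finite_Un finite_subset)+
  have c1: "card (V - X) = card V - card X" using card_Diff_subset[OF fX X(1)] .
  have c2: "card A + card B = card (V - X)" using card_Un_disjoint[OF fA X(2)] X(3) by simp
  have "card X < k" using Suc.hyps(2) by linarith
  then have "card A + card B \<ge> 3" using c1 c2 assms(2) by linarith
  then have big: "card A \<ge> 2 \<or> card B \<ge> 2" by linarith
  have step: "\<exists>X' A' B'. sep V E X' A' B' \<and> card X' = k"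
    if s: "sep V E X A' B'" "card A' \<ge> 2" for A' B'
  proof -
    have s': "X \<subseteq> V" "A' \<inter> B' = {}" "A' \<union> B' = V - X" "A' \<noteq> {}" "B' \<noteq> {}"
      "\<forall>e\<in>E. e \<subseteq> V - X \<longrightarrow> e \<inter> A' = {} \<or> e \<inter> B' = {}"
      using s unfolding sep_def by auto
    obtain x where x: "x \<in> A'" using s' by blast
    have "A' - {x} \<noteq> {}"
    proof
      assume "A' - {x} = {}"
      then have "A' = {x}" using x by blast
      then show False using s(2) by simp
    qed
    then have ns: "sep V E (insert x X) (A' - {x}) B'" unfolding sep_def using s' x by blast
    have xX: "x \<notin> X" using x s' by blast
    have c: "card (insert x X) = card X + 1" using xX fX by simp
    show ?thesis using Suc.hyps(1)[of "insert x X", OF _ ns] c Suc by auto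
  qed
  show ?case using big step Suc.prems(1) step[of B A] sep_sym by blast
qed



lemma witness_side:
  assumes fV: "finite V" and s: "sep V E X A B" and kb: "kappa_bar V E \<le> int k"
    and cX: "card X \<le> k" and fsub: "f \<subseteq> V" and kf: "kappa_bar V (insert f E) \<ge> int k + 1"
  shows "(f \<subseteq> A \<union> B \<and> f \<inter> A \<noteq> {} \<and> f \<inter> B \<noteq> {}) \<or>
         (f \<subseteq> A \<union> X \<and> kappa_bar (A \<union> X) (insert f {e\<in>E. e \<subseteq> A \<union> X}) \<ge> int k + 1) \<or>
         (f \<subseteq> B \<union> X \<and> kappa_bar (B \<union> X) (insert f {e\<in>E. e \<subseteq> B \<union> X}) \<ge> int k + 1)"
proof -
  have s': "X \<subseteq> V" "A \<inter> B = {}" "A \<union> B = V - X" "A \<noteq> {}" "B \<noteq> {}"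
      "\<forall>e\<in>E. e \<subseteq> V - X \<longrightarrow> e \<inter> A = {} \<or> e \<inter> B = {}"
    using s unfolding sep_def by auto
  have "\<exists>W E'. W \<subseteq> V \<and> E' \<subseteq> insert f E \<and> hypergraph W E' \<and> kappa W E' \<ge> int k + 1"
    by (rule kb_obtain[where V=V and E="insert f E" and c="int k + 1", OF fV kf])
  then obtain W E' where w: "W \<subseteq> V" "E' \<subseteq> insert f E" "hypergraph W E'" "kappa W E' \<ge> int k + 1"
    by blast
  have fE': "f \<in> E'"
  proof (rule ccontr)
    assume "f \<notin> E'"
    then have "E' \<subseteq> E" using w(2) by blast
    then have "kappa W E' \<le> kappa_bar V E" using kb_ge[OF fV w(1) _ w(3)] by blast
    then show False using w(4) kb by linarith
  qed
  have fW: "f \<subseteq> W" using w(3) fE' unfolding hypergraph_def by blast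
  have finW: "finite W" using w(3) unfolding hypergraph_def by blast
  have kg: "card W \<ge> k + 2 \<and> (\<forall>Y \<subseteq> W. card Y \<le> k \<longrightarrow> connected_hg (W - Y) {e\<in>E'. e \<subseteq> W - Y})"
    by (rule kappa_ge[OF w(3,4)])
  have fX: "finite X" using finite_subset[OF s'(1) fV] .
  have "card (X \<inter> W) \<le> card X" using card_mono[OF fX] by blast
  then have "card (X \<inter> W) \<le> k" using cX by linarith
  then have conn0: "connected_hg (W - X \<inter> W) {e\<in>E'. e \<subseteq> W - X \<inter> W}" using kg by blast
  have eqU: "W - X \<inter> W = W - X" by blast
  let ?U = "W - X"
  have conn: "connected_hg ?U {e\<in>E'. e \<subseteq> ?U}" using conn0 unfolding eqU .
  have UAB: "?U \<subseteq> A \<union> B" using w(1) s'(3) by blast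
  show ?thesis
  proof (cases "?U \<inter> A \<noteq> {} \<and> ?U \<inter> B \<noteq> {}")
    case True
    then obtain a b where ab: "a \<in> ?U" "a \<in> A" "b \<in> ?U" "b \<in> B" by blast
    have "b \<notin> A" using ab s'(2) by blast
    then obtain g where g: "g \<in> {e\<in>E'. e \<subseteq> ?U}" "\<exists>x\<in>g. \<exists>y\<in>g. x \<in> A \<and> y \<notin> A \<and> y \<in> ?U"
      using path_cross[OF conn ab(1,2,3)] by blast
    then have gA: "g \<inter> A \<noteq> {}" and gB: "g \<inter> B \<noteq> {}" using UAB by blast+
    have gU: "g \<subseteq> ?U" using g by blast
    have "g = f"
    proof (rule ccontr)
      assume "g \<noteq> f"
      then have "g \<in> E" using g w(2) by blast
      moreover have "g \<subseteq> V - X" using gU w(1) by blast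
      ultimately show False using s'(6) gA gB by blast
    qed
    then show ?thesis using gA gB gU UAB by blast
  next
    case False
    then have "?U \<inter> A = {} \<or> ?U \<inter> B = {}" by blast
    then show ?thesis
    proof
      assume UA: "?U \<inter> A = {}"
      have WB: "W \<subseteq> B \<union> X" using UA UAB by blast
      have fin: "finite (B \<union> X)" using s'(1,3) fV by (metis Diff_subset finite_Un finite_subset)
      have "E' \<subseteq> insert f {e\<in>E. e \<subseteq> B \<union> X}"
        using w(2,3) WB unfolding hypergraph_def by blast
      then have "kappa W E' \<le> kappa_bar (B \<union> X) (insert f {e\<in>E. e \<subseteq> B \<union> X})"
        using kb_ge[OF fin WB _ w(3)] by blast
      then show ?thesis using w(4) fW WB by auto
    next
      assume UB: "?U \<inter> B = {}"
      have WA: "W \<subseteq> A \<union> X" using UB UAB by blast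
      have fin: "finite (A \<union> X)" using s'(1,3) fV by (metis Diff_subset finite_Un finite_subset)
      have "E' \<subseteq> insert f {e\<in>E. e \<subseteq> A \<union> X}"
        using w(2,3) WA unfolding hypergraph_def by blast
      then have "kappa W E' \<le> kappa_bar (A \<union> X) (insert f {e\<in>E. e \<subseteq> A \<union> X})"
        using kb_ge[OF fin WA _ w(3)] by blast
      then show ?thesis using w(4) fW WA by auto
    qed
  qed
qed



lemma cross_count:
  assumes "finite A" "finite B" "A \<inter> B = {}" "r \<ge> 1"
  shows "card {f. f \<subseteq> A \<union> B \<and> card f = r \<and> f \<inter> A \<noteq> {} \<and> f \<inter> B \<noteq> {}}
         + (card A choose r) + (card B choose r) \<le> (card A + card B) choose r"
proof -
  let ?C = "{f. f \<subseteq> A \<union> B \<and> card f = r \<and> f \<inter> A \<noteq> {} \<and> f \<inter> B \<noteq> {}}"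
  let ?TA = "{f. f \<subseteq> A \<and> card f = r}"
  let ?TB = "{f. f \<subseteq> B \<and> card f = r}"
  let ?T = "{f. f \<subseteq> A \<union> B \<and> card f = r}"
  have fAB: "finite (A \<union> B)" using assms by simp
  have fT: "finite ?T" by (rule finite_subset[OF _ finite_Pow_iff[THEN iffD2, OF fAB]]) auto
  have fC: "finite ?C" by (rule finite_subset[OF _ finite_Pow_iff[THEN iffD2, OF fAB]]) auto
  have fTA: "finite ?TA" by (rule finite_subset[OF _ finite_Pow_iff[THEN iffD2, OF assms(1)]]) auto
  have fTB: "finite ?TB" by (rule finite_subset[OF _ finite_Pow_iff[THEN iffD2, OF assms(2)]]) auto
  have d1: "?C \<inter> ?TA = {}" using assms(3) by blast
  have d2: "(?C \<union> ?TA) \<inter> ?TB = {}"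
  proof -
    have "?TA \<inter> ?TB = {}"
    proof (rule ccontr)
      assume "?TA \<inter> ?TB \<noteq> {}"
      then obtain f where "f \<subseteq> A" "f \<subseteq> B" "card f = r" by blast
      then have "f = {}" using assms(3) by blast
      then show False using \<open>card f = r\<close> assms(4) by simp
    qed
    then show ?thesis using assms(3) by blast
  qed
  have "card (?C \<union> ?TA \<union> ?TB) = card ?C + card ?TA + card ?TB"
    using card_Un_disjoint[OF finite_UnI[OF fC fTA] fTB d2] card_Un_disjoint[OF fC fTA d1] by simp
  moreover have "card (?C \<union> ?TA \<union> ?TB) \<le> card ?T" by (rule card_mono[OF fT]) auto
  moreover have "card ?T = (card A + card B) choose r"
    using n_subsets[OF fAB, of r] card_Un_disjoint[OF assms(1,2,3)] by simp
  moreover have "card ?TA = card A choose r" using n_subsets[OF assms(1)] .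
  moreover have "card ?TB = card B choose r" using n_subsets[OF assms(2)] .
  ultimately show ?thesis by linarith
qed



lemma main_lemma:
  assumes r: "r \<ge> 1"
  shows "card V = n \<Longrightarrow> hypergraph V E \<Longrightarrow> kappa_bar V E \<le> int k \<Longrightarrow>
    (\<forall>f\<in>F. f \<subseteq> V \<and> card f = r \<and> kappa_bar V (insert f E) \<ge> int k + 1) \<Longrightarrow>
    card F \<le> (n - k) choose r"
proof (induction n arbitrary: V E F rule: less_induct)
  case (less n)
  have fV: "finite V" using less.prems(2) unfolding hypergraph_def by blast
  have "F \<subseteq> Pow V" using less.prems(4) by blast
  then have FP: "finite F" using fV by (simp add: finite_subset)
  show ?case
  proof (cases "n \<ge> k + 2")
    case False
    have "F = {}"
    proof (rule ccontr)
      assume "F \<noteq> {}"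
      then obtain f where f: "f \<in> F" by blast
      then have kf: "kappa_bar V (insert f E) \<ge> int k + 1" using less.prems(4) by blast
      have "\<exists>W E'. W \<subseteq> V \<and> E' \<subseteq> insert f E \<and> hypergraph W E' \<and> kappa W E' \<ge> int k + 1"
        by (rule kb_obtain[where V=V and E="insert f E" and c="int k + 1", OF fV kf])
      then obtain W E' where w: "W \<subseteq> V" "hypergraph W E'" "kappa W E' \<ge> int k + 1" by blast
      have "card W \<ge> k + 2" using kappa_ge[OF w(2,3)] by blast
      moreover have "card W \<le> card V" using card_mono[OF fV w(1)] .
      ultimately show False using False less.prems(1) by linarith
    qed
    then show ?thesis by simp
  next
    case True
    obtain X0 A0 B0 where "sep V E X0 A0 B0" "card X0 \<le> k"
      using exists_sep[OF less.prems(2,3)] True less.prems(1) by blast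
    then obtain X A B where s: "sep V E X A B" and cX: "card X = k"
      using sep_enlarge[OF fV, of k E X0 A0 B0] True less.prems(1) by blast
    have s': "X \<subseteq> V" "A \<inter> B = {}" "A \<union> B = V - X" "A \<noteq> {}" "B \<noteq> {}"
      using s unfolding sep_def by auto
    have fX: "finite X" using finite_subset[OF s'(1) fV] .
    have fA: "finite A" "finite B" using s'(3) fV by (metis Diff_subset finite_Un finite_subset)+
    have dAX: "A \<inter> X = {}" "B \<inter> X = {}" using s'(3) by blast+
    have cV: "card V = card A + card B + k"
    proof -
      have "card (V - X) = card V - card X" using card_Diff_subset[OF fX s'(1)] .
      moreover have "card (A \<union> B) = card A + card B" using card_Un_disjoint[OF fA s'(2)] .
      moreover have "card X \<le> card V" using card_mono[OF fV s'(1)] .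
      moreover have "card (A \<union> B) = card (V - X)" using s'(3) by simp
      ultimately show ?thesis using cX by linarith
    qed
    have cA: "card A > 0" "card B > 0" using fA s'(4,5) by auto
    define EA where "EA = {e\<in>E. e \<subseteq> A \<union> X}"
    define EB where "EB = {e\<in>E. e \<subseteq> B \<union> X}"
    define FA where "FA = {f\<in>F. f \<subseteq> A \<union> X \<and> kappa_bar (A \<union> X) (insert f EA) \<ge> int k + 1}"
    define FB where "FB = {f\<in>F. f \<subseteq> B \<union> X \<and> kappa_bar (B \<union> X) (insert f EB) \<ge> int k + 1}"
    define C where "C = {f. f \<subseteq> A \<union> B \<and> card f = r \<and> f \<inter> A \<noteq> {} \<and> f \<inter> B \<noteq> {}}"
    have cover: "F \<subseteq> FA \<union> FB \<union> C"
    proof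
      fix f assume f: "f \<in> F"
      then have fp: "f \<subseteq> V" "card f = r" "kappa_bar V (insert f E) \<ge> int k + 1" using less.prems(4) by auto
      from witness_side[OF fV s less.prems(3) _ fp(1) fp(3)] cX
      show "f \<in> FA \<union> FB \<union> C" unfolding FA_def FB_def C_def EA_def EB_def using f fp(2) by auto
    qed
    have cAX: "card (A \<union> X) = card A + k" using card_Un_disjoint[OF fA(1) fX dAX(1)] cX by simp
    have cBX: "card (B \<union> X) = card B + k" using card_Un_disjoint[OF fA(2) fX dAX(2)] cX by simp
    have AXV: "A \<union> X \<subseteq> V" "B \<union> X \<subseteq> V" using s' by blast+
    have hA: "hypergraph (A \<union> X) EA" using less.prems(2) fA fX unfolding hypergraph_def EA_def by auto
    have hB: "hypergraph (B \<union> X) EB" using less.prems(2) fA fX unfolding hypergraph_def EB_def by auto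
    have "EA \<subseteq> E" "EB \<subseteq> E" unfolding EA_def EB_def by blast+
    have kA: "kappa_bar (A \<union> X) EA \<le> int k"
      using kb_mono[OF fV AXV(1) \<open>EA \<subseteq> E\<close>] less.prems(3) by linarith
    have kB: "kappa_bar (B \<union> X) EB \<le> int k"
      using kb_mono[OF fV AXV(2) \<open>EB \<subseteq> E\<close>] less.prems(3) by linarith
    have IA: "card FA \<le> (card (A \<union> X) - k) choose r"
    proof (rule less.IH[OF _ refl hA kA])
      show "card (A \<union> X) < n" using cAX cV less.prems(1) cA by linarith
      show "\<forall>f\<in>FA. f \<subseteq> A \<union> X \<and> card f = r \<and> kappa_bar (A \<union> X) (insert f EA) \<ge> int k + 1"
        unfolding FA_def using less.prems(4) by blast
    qed
    have IB: "card FB \<le> (card (B \<union> X) - k) choose r"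
    proof (rule less.IH[OF _ refl hB kB])
      show "card (B \<union> X) < n" using cBX cV less.prems(1) cA by linarith
      show "\<forall>f\<in>FB. f \<subseteq> B \<union> X \<and> card f = r \<and> kappa_bar (B \<union> X) (insert f EB) \<ge> int k + 1"
        unfolding FB_def using less.prems(4) by blast
    qed
    have fFA: "finite FA" "finite FB" using FP unfolding FA_def FB_def by auto
    have fC: "finite C" unfolding C_def by (rule finite_subset[OF _ finite_Pow_iff[THEN iffD2, OF finite_UnI[OF fA]]]) auto
    have "card F \<le> card (FA \<union> FB \<union> C)" using card_mono[OF _ cover] fFA fC by blast
    also have "\<dots> \<le> card FA + card FB + card C"
    proof -
      have "card (FA \<union> FB \<union> C) \<le> card (FA \<union> FB) + card C" by (rule card_Un_le)
      moreover have "card (FA \<union> FB) \<le> card FA + card FB" by (rule card_Un_le)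
      ultimately show ?thesis by linarith
    qed
    also have "\<dots> \<le> (card A choose r) + (card B choose r) + card C" using IA IB cAX cBX by simp
    also have "\<dots> \<le> (card A + card B) choose r"
      using cross_count[OF fA s'(2) r] unfolding C_def by linarith
    also have "\<dots> = (n - k) choose r" using cV less.prems(1) by simp
    finally show ?thesis .
  qed
qed



theorem theorem3p2:
  fixes V :: "'a set" and E :: "'a set set" and n k r :: nat
  assumes "k \<ge> 2" and "r \<ge> 2" and "n \<ge> k + 1"
    and "uniform r V E" and "card V = n"
    and "vertex_k_maximal r k V E"
  shows "int (card E) \<ge> int (n choose r) - int ((n - k) choose r)"
proof -
  have h: "hypergraph V E" and ce: "\<forall>e\<in>E. card e = r" using assms(4) unfolding uniform_def by auto
  have fV: "finite V" using h unfolding hypergraph_def by blast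
  have kb: "kappa_bar V E \<le> int k" and mx: "\<forall>e\<in>compl_edges r V E. kappa_bar V (insert e E) \<ge> int k + 1"
    using assms(6) unfolding vertex_k_maximal_def by auto
  let ?N = "compl_edges r V E"
  let ?T = "{f. f \<subseteq> V \<and> card f = r}"
  have r1: "r \<ge> 1" using assms(2) by simp
  have "\<forall>f\<in>?N. f \<subseteq> V \<and> card f = r \<and> kappa_bar V (insert f E) \<ge> int k + 1"
    using mx unfolding compl_edges_def by blast
  then have cN: "card ?N \<le> (n - k) choose r"
    using main_lemma[OF r1 assms(5) h kb] by blast
  have fT: "finite ?T" by (rule finite_subset[OF _ finite_Pow_iff[THEN iffD2, OF fV]]) auto
  have ET: "E \<subseteq> ?T" using h ce unfolding hypergraph_def by blast
  have NT: "?N = ?T - E" unfolding compl_edges_def by blast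
  have fE: "finite E" using finite_subset[OF ET fT] .
  have "card ?N = card ?T - card E" unfolding NT using card_Diff_subset[OF fE ET] .
  moreover have "card E \<le> card ?T" using card_mono[OF fT ET] .
  moreover have "card ?T = n choose r" using n_subsets[OF fV, of r] assms(5) by simp
  ultimately show ?thesis using cN by linarith
qed


end
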